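(* Let $\Omega\subset\mathbb{R}^N$ be a bounded open set and let $J$ satisfy (H0), (H0') and (H1), with moreover $\lim_{s\to0^+}\ell(s)=+\infty$. Then the embedding $\mathcal{H}_J(\Omega)\hookrightarrow L^2(\Omega)$ is compact, i.e. every subset of $\mathcal{H}_J(\Omega)$ bounded in the norm $\|\cdot\|_{\mathcal{H}_J}$ is totally bounded in $L^2(\Omega)$.
   Context: Standing setting: $N\ge1$, $\Omega\subset\mathbb{R}^N$ bounded open, $B_\varepsilon=\{z\in\mathbb{R}^N:|z|<\varepsilon\}$. (H0): $J:\mathbb{R}^N\times\mathbb{R}^N\to[0,\infty)$ is measurable, $J(x,y)=J(y,x)$, and $\sup_{x\in\mathbb{R}^N}\int_{\mathbb{R}^N}\min(1,|x-y|^2)J(x,y)\,dy<\infty$. (H0'): $J(x,y)\ge\mathcal{K}(x-y)\ge0$ for a measurable $\mathcal{K}:\mathbb{R}^N\to[0,\infty)$ with $\mathcal{K}\notin L^1(B_\varepsilon)$ for every $\varepsilon>0$. (H1): there exist $\rho>0$ and $\ell:(0,\rho)\to(0,\infty)$, bounded above and below by positive constants on $[\varepsilon,\rho)$ for every $\varepsilon\in(0,\rho)$, such that $\mathcal{K}(z)=|z|^{-N}\ell(|z|)$ for $0<|z|<\rho$ and $M(r):=\int_r^\rho\frac{\ell(s)}{s}\,ds\to\infty$ as $r\to0^+$. Let $Q_\Omega=(\Omega^c\times\Omega^c)^c$ and $\mathcal{E}(u,v)=\frac12\iint_{Q_\Omega}(u(x)-u(y))(v(x)-v(y))J(x,y)\,dx\,dy$.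 $\mathcal{H}_J(\Omega)=\{u:\mathbb{R}^N\to\mathbb{R}$ measurable$:\ u|_\Omega\in L^2(\Omega),\ \mathcal{E}(u,u)<\infty\}$, with norm $\|u\|_{\mathcal{H}_J}=(\int_\Omega u^2+\mathcal{E}(u,u))^{1/2}$. *)

theory Defs
  imports "HOL-Analysis.Analysis"
begin

definition QOmega :: "'a set \<Rightarrow> ('a \<times> 'a) set" where
  "QOmega \<Omega> = - ((- \<Omega>) \<times> (- \<Omega>))"

definition energy :: "('a::euclidean_space \<times> 'a \<Rightarrow> real) \<Rightarrow> 'a set \<Rightarrow> ('a \<Rightarrow> real) \<Rightarrow> ennreal" where
  "energy J \<Omega> u = (1/2) * (\<integral>\<^sup>+ p \<in> QOmega \<Omega>.
       ennreal ((u (fst p) - u (snd p))\<^sup>2 * J p) \<partial>lebesgue)"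

definition L2sq :: "'a::euclidean_space set \<Rightarrow> ('a \<Rightarrow> real) \<Rightarrow> ennreal" where
  "L2sq \<Omega> u = (\<integral>\<^sup>+ x \<in> \<Omega>. ennreal ((u x)\<^sup>2) \<partial>lebesgue)"

definition HJ :: "('a::euclidean_space \<times> 'a \<Rightarrow> real) \<Rightarrow> 'a set \<Rightarrow> ('a \<Rightarrow> real) set" where
  "HJ J \<Omega> = {u. u \<in> borel_measurable lebesgue \<and> L2sq \<Omega> u < \<infinity> \<and> energy J \<Omega> u < \<infinity>}"

definition HJnormsq :: "('a::euclidean_space \<times> 'a \<Rightarrow> real) \<Rightarrow> 'a set \<Rightarrow> ('a \<Rightarrow> real) \<Rightarrow> ennreal" where
  "HJnormsq J \<Omega> u = L2sq \<Omega> u + energy J \<Omega> u"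

definition L2_totally_bounded :: "'a::euclidean_space set \<Rightarrow> ('a \<Rightarrow> real) set \<Rightarrow> bool" where
  "L2_totally_bounded \<Omega> S \<longleftrightarrow>
     (\<forall>e>0. \<exists>F. finite F \<and> F \<subseteq> S \<and>
        (\<forall>u\<in>S. \<exists>v\<in>F. L2sq \<Omega> (\<lambda>x. u x - v x) < ennreal (e\<^sup>2)))"

end

theory Submission
  imports Defs
begin

definition cell :: "real \<Rightarrow> ('a::euclidean_space \<Rightarrow> int) \<Rightarrow> 'a set" where
  "cell s k = {x. \<forall>b\<in>Basis. of_int (k b) * s \<le> x \<bullet> b \<and> x \<bullet> b < (of_int (k b) + 1) * s}"

lemma cell_sets[measurable]: "cell s k \<in> sets lborel"
  unfolding cell_def by measurable

lemma cell_diam: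
  fixes x y :: "'a::euclidean_space"
  assumes "x \<in> cell s k" "y \<in> cell s k"
  shows "norm (x - y) \<le> real DIM('a) * s"
proof -
  have "norm (x - y) \<le> (\<Sum>b\<in>(Basis::'a set). \<bar>(x - y) \<bullet> b\<bar>)" by (rule norm_le_l1)
  also have "\<dots> \<le> (\<Sum>b\<in>(Basis::'a set). s)"
  proof (rule sum_mono)
    fix b :: 'a assume "b \<in> Basis"
    have "of_int (k b) * s \<le> x \<bullet> b \<and> x \<bullet> b < (of_int (k b) + 1) * s" using assms(1) \<open>b \<in> Basis\<close> unfolding cell_def by auto
    moreover have "of_int (k b) * s \<le> y \<bullet> b \<and> y \<bullet> b < (of_int (k b) + 1) * s" using assms(2) \<open>b \<in> Basis\<close> unfolding cell_def by auto
    ultimately show "\<bar>(x - y) \<bullet> b\<bar> \<le> s" by (simp add: inner_diff_left abs_le_iff algebra_simps)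
  qed
  finally show ?thesis by simp
qed

lemma cell_measure:
  fixes k :: "'a::euclidean_space \<Rightarrow> int"
  assumes "s > 0"
  shows "emeasure lborel (cell s k) \<ge> ennreal (s ^ DIM('a))"
proof -
  define l :: 'a where "l = (\<Sum>b\<in>Basis. (of_int (k b) * s) *\<^sub>R b)"
  define u :: 'a where "u = (\<Sum>b\<in>Basis. ((of_int (k b) + 1) * s) *\<^sub>R b)"
  have l: "l \<bullet> b = of_int (k b) * s" if "b \<in> Basis" for b
    using that unfolding l_def by (simp add: inner_sum_left inner_Basis if_distrib sum.delta cong: if_cong)
  have u: "u \<bullet> b = (of_int (k b) + 1) * s" if "b \<in> Basis" for b
    using that unfolding u_def by (simp add: inner_sum_left inner_Basis if_distrib sum.delta cong: if_cong)
  have sub: "box l u \<subseteq> cell s k"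
    unfolding cell_def box_def using l u by fastforce
  have "emeasure lborel (box l u) = (\<Prod>b\<in>Basis. (u - l) \<bullet> b)"
    using l u assms by (intro emeasure_lborel_box) (auto simp: algebra_simps)
  also have "\<dots> = (\<Prod>b\<in>(Basis::'a set). s)"
    using l u by (intro arg_cong[where f=ennreal] prod.cong) (auto simp: inner_diff_left algebra_simps)
  also have "\<dots> = s ^ DIM('a)" by simp
  finally have "emeasure lborel (box l u) = ennreal (s ^ DIM('a))" by simp
  moreover have "emeasure lborel (box l u) \<le> emeasure lborel (cell s k)"
    using sub cell_sets[of s k] by (intro emeasure_mono) auto
  ultimately show ?thesis by simp
qed

lemma cell_disj:
  fixes x :: "'a::euclidean_space"
  assumes "s > 0" "x \<in> cell s k" "x \<in> cell s k'" "b \<in> Basis"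
  shows "k b = k' b"
proof -
  have "k b = \<lfloor>x \<bullet> b / s\<rfloor>" using assms unfolding cell_def
    by (intro floor_unique[symmetric]) (auto simp: field_simps)
  moreover have "k' b = \<lfloor>x \<bullet> b / s\<rfloor>" using assms unfolding cell_def
    by (intro floor_unique[symmetric]) (auto simp: field_simps)
  ultimately show ?thesis by simp
qed

lemma floor_cell:
  assumes "(s::real) > 0"
  shows "s * of_int \<lfloor>a / s\<rfloor> \<le> a \<and> a < s + s * of_int \<lfloor>a / s\<rfloor>"
proof -
  have 1: "of_int \<lfloor>a / s\<rfloor> \<le> a / s" by linarith
  have 2: "a / s < of_int \<lfloor>a / s\<rfloor> + 1" by linarith
  from mult_right_mono[OF 1, of s] assms have "s * of_int \<lfloor>a / s\<rfloor> \<le> a" by (simp add: field_simps)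
  moreover from mult_strict_right_mono[OF 2 assms] assms have "a < s + s * of_int \<lfloor>a / s\<rfloor>" by (simp add: field_simps)
  ultimately show ?thesis by simp
qed

lemma cells_exist:
  fixes \<Omega> :: "'a::euclidean_space set"
  assumes "bounded \<Omega>" "s > 0"
  obtains I where "finite I" "disjoint_family_on (cell s) I" "\<Omega> \<subseteq> (\<Union>k\<in>I. cell s k)"
proof -
  obtain R where R: "R > 0" "\<And>x. x \<in> \<Omega> \<Longrightarrow> norm x \<le> R" using assms(1) bounded_pos by blast
  define M :: int where "M = \<lceil>R / s\<rceil> + 1"
  define I where "I = PiE (Basis::'a set) (\<lambda>_. {-M..M})"
  have "finite I" unfolding I_def by (intro finite_PiE) auto
  moreover have "disjoint_family_on (cell s) I"
    unfolding disjoint_family_on_def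
  proof (intro ballI impI)
    fix k k' assume kI: "k \<in> I" "k' \<in> I" "k \<noteq> k'"
    show "cell s k \<inter> cell s k' = {}"
    proof (rule ccontr)
      assume "cell s k \<inter> cell s k' \<noteq> {}"
      then obtain x where x: "x \<in> cell s k" "x \<in> cell s k'" by blast
      have "k = k'"
      proof
        fix b show "k b = k' b"
        proof (cases "b \<in> Basis")
          case True then show ?thesis using cell_disj[OF assms(2) x] by blast
        next
          case False then show ?thesis using kI unfolding I_def by (auto simp: PiE_def extensional_def)
        qed
      qed
      with kI show False by simp
    qed
  qed
  moreover have "\<Omega> \<subseteq> (\<Union>k\<in>I. cell s k)"
  proof
    fix x assume x: "x \<in> \<Omega>"
    define k where "k = restrict (\<lambda>b. \<lfloor>x \<bullet> b / s\<rfloor>) Basis"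
    have kI: "k \<in> I" unfolding I_def k_def
    proof (rule restrict_PiE_iff[THEN iffD2], intro ballI)
      fix b :: 'a assume b: "b \<in> Basis"
      have xb: "\<bar>x \<bullet> b\<bar> \<le> R" using Basis_le_norm[OF b, of x] R(2)[OF x] by linarith
      have "x \<bullet> b / s \<le> R / s" using xb assms(2) by (simp add: divide_right_mono)
      moreover have "- (R / s) \<le> x \<bullet> b / s"
      proof -
        have "-R \<le> x \<bullet> b" using xb by linarith
        from divide_right_mono[OF this, of s] assms(2) show ?thesis by simp
      qed
      moreover have "R / s \<le> of_int \<lceil>R / s\<rceil>" by linarith
      ultimately show "\<lfloor>x \<bullet> b / s\<rfloor> \<in> {-M..M}" unfolding M_def by (simp; linarith)
    qed
    have "x \<in> cell s k" unfolding cell_def k_def using assms(2)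
      by (auto simp: field_simps floor_cell)
    with kI show "x \<in> (\<Union>k\<in>I. cell s k)" by blast
  qed
  ultimately show ?thesis using that by blast
qed
lemma sum_indicator_disj:
  assumes "finite I" "disjoint_family_on Q I" "\<Omega> \<subseteq> (\<Union>k\<in>I. Q k)"
  shows "(\<Sum>k\<in>I. indicator (Q k \<inter> \<Omega>) x :: ennreal) = indicator \<Omega> x"
proof (cases "x \<in> \<Omega>")
  case True
  then obtain k0 where k0: "k0 \<in> I" "x \<in> Q k0" using assms(3) by blast
  have "(\<Sum>k\<in>I. indicator (Q k \<inter> \<Omega>) x :: ennreal) = (\<Sum>k\<in>I. if k = k0 then 1 else 0)"
  proof (rule sum.cong)
    fix k assume "k \<in> I"
    show "indicator (Q k \<inter> \<Omega>) x = (if k = k0 then 1 else (0::ennreal))"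
    proof (cases "k = k0")
      case False then have "Q k \<inter> Q k0 = {}" using assms(2) k0 \<open>k \<in> I\<close> unfolding disjoint_family_on_def by blast
      then have "x \<notin> Q k" using k0 by blast
      then show ?thesis using False by (simp add: indicator_def)
    qed (use k0 True in auto)
  qed simp
  also have "\<dots> = 1" using k0 assms(1) by simp
  finally show ?thesis using True by simp
qed simp

lemma decomp:
  fixes f :: "'a \<Rightarrow> ennreal"
  assumes "finite I" "\<And>k. k\<in>I \<Longrightarrow> Q k \<in> sets M" "\<Omega> \<in> sets M" "disjoint_family_on Q I"
    "\<Omega> \<subseteq> (\<Union>k\<in>I. Q k)" "f \<in> borel_measurable M"
  shows "(\<integral>\<^sup>+x. f x * indicator \<Omega> x \<partial>M) = (\<Sum>k\<in>I. \<integral>\<^sup>+x. f x * indicator (Q k \<inter> \<Omega>) x \<partial>M)"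
proof -
  have "(\<Sum>k\<in>I. \<integral>\<^sup>+x. f x * indicator (Q k \<inter> \<Omega>) x \<partial>M) = (\<integral>\<^sup>+x. (\<Sum>k\<in>I. f x * indicator (Q k \<inter> \<Omega>) x) \<partial>M)"
    using assms by (intro nn_integral_sum[symmetric]) auto
  also have "\<dots> = (\<integral>\<^sup>+x. f x * indicator \<Omega> x \<partial>M)"
    by (intro nn_integral_cong) (simp add: sum_distrib_left[symmetric] sum_indicator_disj[OF assms(1,4,5)])
  finally show ?thesis ..
qed
lemma key_A_bound:
  fixes g :: "'a::euclidean_space \<Rightarrow> real" and u :: "'a \<Rightarrow> real" and J :: "'a \<times> 'a \<Rightarrow> real" and Q :: "'i \<Rightarrow> 'a set"
  assumes g[measurable]: "g \<in> borel_measurable lborel"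
    and N: "N \<in> null_sets lborel" "\<And>x. u x \<noteq> g x \<Longrightarrow> x \<in> N"
    and fin: "finite I"
    and Qs: "\<And>k. k\<in>I \<Longrightarrow> Q k \<in> sets lborel"
    and disj: "disjoint_family_on Q I"
    and \<Omega>: "open \<Omega>"
    and J_meas: "J \<in> borel_measurable lebesgue"
    and \<kappa>: "\<kappa> \<ge> 0" "\<And>k x y. k\<in>I \<Longrightarrow> x\<in>Q k \<Longrightarrow> x \<in> \<Omega> \<Longrightarrow> y \<in> Q k \<Longrightarrow> x \<noteq> y \<Longrightarrow> 1 \<le> \<kappa> * J(x,y)"
    and E: "(\<integral>\<^sup>+p. ennreal((u(fst p) - u(snd p))^2 * J p) * indicator (QOmega \<Omega>) p \<partial>lebesgue) \<le> ennreal E"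
  shows "(\<Sum>k\<in>I. \<integral>\<^sup>+p. ennreal ((g (fst p) - g (snd p))^2) * indicator ((Q k \<inter> \<Omega>) \<times> Q k) p \<partial>lborel) \<le> ennreal (\<kappa> * E)"
proof -
  define F where "F p = ennreal ((g (fst p) - g (snd p))^2)" for p :: "'a \<times> 'a"
  define R where "R k = (Q k \<inter> \<Omega>) \<times> Q k" for k
  define U where "U = (\<Union>k\<in>I. R k)"
  have \<Omega>s: "\<Omega> \<in> sets lborel" using \<Omega> by simp
  have Rs: "R k \<in> sets (lborel :: ('a \<times> 'a) measure)" if "k \<in> I" for k
  proof -
    have "R k \<in> sets (lborel \<Otimes>\<^sub>M lborel)" unfolding R_def using Qs[OF that] \<Omega>s by (intro pair_measureI) auto
    then show ?thesis by (simp only: lborel_prod)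
  qed
  have Fm: "F \<in> borel_measurable (lborel :: ('a \<times> 'a) measure)"
  proof -
    have "F \<in> borel_measurable (lborel \<Otimes>\<^sub>M lborel)" unfolding F_def by measurable
    then show ?thesis by (simp only: lborel_prod)
  qed
  have Rdisj: "disjoint_family_on R I"
    using disj unfolding disjoint_family_on_def R_def by auto
  have "(\<Sum>k\<in>I. \<integral>\<^sup>+p. F p * indicator (R k) p \<partial>lborel) = (\<integral>\<^sup>+p. (\<Sum>k\<in>I. F p * indicator (R k) p) \<partial>lborel)"
    using Rs Fm by (intro nn_integral_sum[symmetric]) auto
  also have "\<dots> = (\<integral>\<^sup>+p. F p * indicator U p \<partial>lborel)"
  proof (intro nn_integral_cong)
    fix p :: "'a \<times> 'a"
    have "(\<Sum>k\<in>I. indicator (R k \<inter> U) p :: ennreal) = indicator U p"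
      by (rule sum_indicator_disj[OF fin Rdisj]) (auto simp: U_def)
    moreover have "R k \<inter> U = R k" if "k \<in> I" for k using that unfolding U_def by auto
    ultimately have "(\<Sum>k\<in>I. indicator (R k) p :: ennreal) = indicator U p" by simp
    then show "(\<Sum>k\<in>I. F p * indicator (R k) p) = F p * indicator U p"
      by (simp add: sum_distrib_left[symmetric])
  qed
  also have "\<dots> \<le> (\<integral>\<^sup>+p. ennreal \<kappa> * (ennreal ((g (fst p) - g (snd p))^2 * J p) * indicator (QOmega \<Omega>) p) \<partial>lborel)"
  proof (intro nn_integral_mono)
    fix p :: "'a \<times> 'a"
    show "F p * indicator U p \<le> ennreal \<kappa> * (ennreal ((g (fst p) - g (snd p))^2 * J p) * indicator (QOmega \<Omega>) p)"
    proof (cases "p \<in> U")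
      case True
      then obtain k where k: "k \<in> I" "fst p \<in> Q k" "fst p \<in> \<Omega>" "snd p \<in> Q k"
        unfolding U_def R_def by (cases p) auto
      have pQ: "p \<in> QOmega \<Omega>" unfolding QOmega_def using k by (cases p) auto
      show ?thesis
      proof (cases "fst p = snd p")
        case True then show ?thesis by (simp add: F_def)
      next
        case False
        have k1: "1 \<le> \<kappa> * J p" using \<kappa>(2)[OF k(1,2,3,4) False] by (cases p) auto
        have Jp: "J p \<ge> 0" 
        proof (rule ccontr)
          assume "\<not> J p \<ge> 0"
          then have "\<kappa> * J p \<le> 0" using \<kappa>(1) by (simp add: mult_nonneg_nonpos)
          then show False using k1 by simp
        qed
        have "(g (fst p) - g (snd p))^2 * 1 \<le> (g (fst p) - g (snd p))^2 * (\<kappa> * J p)"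
          by (intro mult_left_mono k1) simp
        then have "(g (fst p) - g (snd p))^2 \<le> \<kappa> * ((g (fst p) - g (snd p))^2 * J p)" by (simp add: ac_simps)
        then have "F p \<le> ennreal (\<kappa> * ((g (fst p) - g (snd p))^2 * J p))" unfolding F_def by (rule ennreal_leI)
        also have "\<dots> = ennreal \<kappa> * ennreal ((g (fst p) - g (snd p))^2 * J p)"
          using \<kappa>(1) Jp by (simp add: ennreal_mult)
        finally show ?thesis using True pQ by simp
      qed
    qed simp
  qed
  also have "\<dots> = (\<integral>\<^sup>+p. ennreal \<kappa> * (ennreal ((g (fst p) - g (snd p))^2 * J p) * indicator (QOmega \<Omega>) p) \<partial>lebesgue)"
    by (simp add: nn_integral_completion)
  also have "\<dots> = ennreal \<kappa> * (\<integral>\<^sup>+p. ennreal ((g (fst p) - g (snd p))^2 * J p) * indicator (QOmega \<Omega>) p \<partial>lebesgue)"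
  proof (rule nn_integral_cmult)
    have gf: "(\<lambda>p. g (fst p)) \<in> borel_measurable (lborel :: ('a \<times> 'a) measure)"
    proof -
      have "(\<lambda>p. g (fst p)) \<in> borel_measurable (lborel \<Otimes>\<^sub>M lborel)" by measurable
      then show ?thesis by (simp only: lborel_prod)
    qed
    have gs: "(\<lambda>p. g (snd p)) \<in> borel_measurable (lborel :: ('a \<times> 'a) measure)"
    proof -
      have "(\<lambda>p. g (snd p)) \<in> borel_measurable (lborel \<Otimes>\<^sub>M lborel)" by measurable
      then show ?thesis by (simp only: lborel_prod)
    qed
    have Qo: "QOmega \<Omega> \<in> sets (lborel :: ('a \<times> 'a) measure)"
    proof -
      have "closed ((- \<Omega>) \<times> (- \<Omega>))" using \<Omega> by (intro closed_Times) auto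
      then have "open (QOmega \<Omega>)" unfolding QOmega_def by (simp add: open_Compl)
      then show ?thesis by simp
    qed
    have [measurable]: "(\<lambda>p. g (fst p)) \<in> borel_measurable (lebesgue :: ('a \<times> 'a) measure)"
      using gf by (rule measurable_completion)
    have [measurable]: "(\<lambda>p. g (snd p)) \<in> borel_measurable (lebesgue :: ('a \<times> 'a) measure)"
      using gs by (rule measurable_completion)
    have [measurable]: "QOmega \<Omega> \<in> sets (lebesgue :: ('a \<times> 'a) measure)"
      using Qo by (simp add: sets_completionI_sets)
    note J_meas[measurable]
    show "(\<lambda>p. ennreal ((g (fst p) - g (snd p))^2 * J p) * indicator (QOmega \<Omega>) p) \<in> borel_measurable lebesgue"
      by measurable
  qed
  also have "(\<integral>\<^sup>+p. ennreal ((g (fst p) - g (snd p))^2 * J p) * indicator (QOmega \<Omega>) p \<partial>lebesgue)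
      = (\<integral>\<^sup>+p. ennreal ((u (fst p) - u (snd p))^2 * J p) * indicator (QOmega \<Omega>) p \<partial>lebesgue)"
  proof (rule nn_integral_cong_AE)
    have "N \<times> UNIV \<union> UNIV \<times> N \<in> null_sets (lborel \<Otimes>\<^sub>M lborel :: ('a \<times> 'a) measure)"
      using N(1) by (intro null_sets.Un lborel.times_in_null_sets1 lborel.times_in_null_sets2) auto
    then have nul: "N \<times> UNIV \<union> UNIV \<times> N \<in> null_sets (lborel :: ('a \<times> 'a) measure)" by (simp only: lborel_prod)
    have "AE p in (lborel :: ('a \<times> 'a) measure). u (fst p) = g (fst p) \<and> u (snd p) = g (snd p)"
      by (rule AE_I'[OF nul]) (auto dest: N(2))
    then have "AE p in (lebesgue :: ('a \<times> 'a) measure). u (fst p) = g (fst p) \<and> u (snd p) = g (snd p)"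
      by (rule AE_completion)
    then show "AE p in lebesgue. ennreal ((g (fst p) - g (snd p))^2 * J p) * indicator (QOmega \<Omega>) p =
        ennreal ((u (fst p) - u (snd p))^2 * J p) * indicator (QOmega \<Omega>) p"
      by eventually_elim simp
  qed
  also have "ennreal \<kappa> * (\<integral>\<^sup>+p. ennreal ((u (fst p) - u (snd p))^2 * J p) * indicator (QOmega \<Omega>) p \<partial>lebesgue) \<le> ennreal \<kappa> * ennreal E"
    using E by (intro mult_left_mono) auto
  finally have "(\<Sum>k\<in>I. \<integral>\<^sup>+p. F p * indicator (R k) p \<partial>lborel) \<le> ennreal \<kappa> * ennreal E" .
  then show ?thesis using \<kappa>(1) by (simp add: F_def R_def ennreal_mult')
qed


lemma key_select:
  fixes u :: "'a::euclidean_space \<Rightarrow> real" and J :: "'a \<times> 'a \<Rightarrow> real" and Q :: "'i \<Rightarrow> 'a set"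
  assumes u: "u \<in> borel_measurable lebesgue"
    and fin: "finite I"
    and Qs: "\<And>k. k\<in>I \<Longrightarrow> Q k \<in> sets lborel"
    and Qm: "\<And>k. k\<in>I \<Longrightarrow> ennreal m \<le> emeasure lborel (Q k)" and m: "m > 0"
    and disj: "disjoint_family_on Q I"
    and \<Omega>: "open \<Omega>"
    and J_meas: "J \<in> borel_measurable lebesgue"
    and \<kappa>: "\<kappa> \<ge> 0" "\<And>k x y. k\<in>I \<Longrightarrow> x\<in>Q k \<Longrightarrow> x \<in> \<Omega> \<Longrightarrow> y \<in> Q k \<Longrightarrow> x \<noteq> y \<Longrightarrow> 1 \<le> \<kappa> * J(x,y)"
    and E: "(\<integral>\<^sup>+p. ennreal((u(fst p) - u(snd p))^2 * J p) * indicator (QOmega \<Omega>) p \<partial>lebesgue) \<le> ennreal E" "E \<ge> 0"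
    and t: "t > 0"
  shows "\<exists>y. (\<forall>k\<in>I. y k \<in> Q k) \<and> (\<Sum>k\<in>I. \<integral>\<^sup>+x. ennreal((u x - u (y k))^2) * indicator (Q k \<inter> \<Omega>) x \<partial>lebesgue) \<le> ennreal ((\<kappa>*E + real (card I)*t)/m)"
proof -
  obtain g where g: "g \<in> borel_measurable lborel" "AE x in lborel. u x = g x"
    using completion_ex_borel_measurable_real[OF u] by blast
  note g(1)[measurable]
  from g(2) obtain N where N: "{x\<in>space lborel. \<not> u x = g x} \<subseteq> N" "emeasure lborel N = 0" "N \<in> sets lborel"
    by (rule AE_E)
  have Nn: "N \<in> null_sets lborel" using N by (simp add: null_sets_def)
  have Nu: "x \<in> N" if "u x \<noteq> g x" for x using N(1) that by auto
  have \<Omega>s: "\<Omega> \<in> sets lborel" using \<Omega> by simp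
  define A where "A k = (\<integral>\<^sup>+p. ennreal ((g (fst p) - g (snd p))^2) * indicator ((Q k \<inter> \<Omega>) \<times> Q k) p \<partial>lborel)" for k
  have Asum: "(\<Sum>k\<in>I. A k) \<le> ennreal (\<kappa> * E)"
    unfolding A_def by (rule key_A_bound[OF g(1) Nn Nu fin Qs disj \<Omega> J_meas \<kappa> E(1)])
  define Gg where "Gg k y = (\<integral>\<^sup>+x. ennreal ((g x - g y)^2) * indicator (Q k \<inter> \<Omega>) x \<partial>lborel)" for k y
  have T: "(\<integral>\<^sup>+y. Gg k y * indicator (Q k) y \<partial>lborel) = A k" if k: "k \<in> I" for k
  proof -
    note Qs[OF k, measurable] \<Omega>s[measurable]
    have "(\<integral>\<^sup>+y. Gg k y * indicator (Q k) y \<partial>lborel)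
        = (\<integral>\<^sup>+y. (\<integral>\<^sup>+x. ennreal ((g (fst (x,y)) - g (snd (x,y)))^2) * indicator ((Q k \<inter> \<Omega>) \<times> Q k) (x,y) \<partial>lborel) \<partial>lborel)"
      unfolding Gg_def
    proof (intro nn_integral_cong)
      fix y :: 'a
      have "(\<integral>\<^sup>+x. ennreal ((g x - g y)^2) * indicator (Q k \<inter> \<Omega>) x \<partial>lborel) * indicator (Q k) y
          = (\<integral>\<^sup>+x. ennreal ((g x - g y)^2) * indicator (Q k \<inter> \<Omega>) x * indicator (Q k) y \<partial>lborel)"
        by (rule nn_integral_multc[symmetric]) measurable
      also have "\<dots> = (\<integral>\<^sup>+x. ennreal ((g (fst (x,y)) - g (snd (x,y)))^2) * indicator ((Q k \<inter> \<Omega>) \<times> Q k) (x,y) \<partial>lborel)"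
        by (simp add: indicator_times mult.assoc)
      finally show "(\<integral>\<^sup>+x. ennreal ((g x - g y)^2) * indicator (Q k \<inter> \<Omega>) x \<partial>lborel) * indicator (Q k) y
          = (\<integral>\<^sup>+x. ennreal ((g (fst (x,y)) - g (snd (x,y)))^2) * indicator ((Q k \<inter> \<Omega>) \<times> Q k) (x,y) \<partial>lborel)" .
    qed
    also have "\<dots> = (\<integral>\<^sup>+p. ennreal ((g (fst p) - g (snd p))^2) * indicator ((Q k \<inter> \<Omega>) \<times> Q k) p \<partial>(lborel \<Otimes>\<^sub>M lborel))"
      by (rule lborel_pair.nn_integral_snd) measurable
    also have "\<dots> = A k" unfolding A_def by (simp only: lborel_prod)
    finally show ?thesis .
  qed
  have Afin: "A k < \<infinity>" if "k \<in> I" for k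
  proof -
    have "A k \<le> (\<Sum>k\<in>I. A k)" using that fin by (intro member_le_sum) auto
    also have "\<dots> \<le> ennreal (\<kappa> * E)" by (rule Asum)
    finally show ?thesis by (simp add: le_less_trans)
  qed
  define B where "B k = A k * ennreal (1/m) + ennreal (t/m)" for k
  have Bm: "B k * ennreal m = A k + ennreal t" for k
  proof -
    have "ennreal (1/m) * ennreal m = ennreal (1/m * m)" using m by (intro ennreal_mult[symmetric]) auto
    then have 1: "ennreal (1/m) * ennreal m = 1" using m by simp
    have "ennreal (t/m) * ennreal m = ennreal (t/m * m)" using m t by (intro ennreal_mult[symmetric]) auto
    then have 2: "ennreal (t/m) * ennreal m = ennreal t" using m by simp
    show ?thesis unfolding B_def using 1 2 by (simp add: distrib_right mult.assoc)
  qed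
  have sel: "\<exists>y. y \<in> Q k \<and> u y = g y \<and> Gg k y \<le> B k" if k: "k \<in> I" for k
  proof (rule ccontr)
    assume "\<not> ?thesis"
    then have bad: "B k < Gg k y" if "y \<in> Q k" "y \<notin> N" for y using that Nu by force
    have "AE y in lborel. B k * indicator (Q k) y \<le> Gg k y * indicator (Q k) y"
      using AE_not_in[OF Nn] by eventually_elim (auto simp: indicator_def intro: less_imp_le bad)
    then have "(\<integral>\<^sup>+y. B k * indicator (Q k) y \<partial>lborel) \<le> A k"
      using T[OF k] nn_integral_mono_AE by metis
    then have "B k * emeasure lborel (Q k) \<le> A k" using Qs[OF k] by (simp add: nn_integral_cmult_indicator)
    moreover have "B k * ennreal m \<le> B k * emeasure lborel (Q k)" by (intro mult_left_mono Qm k) auto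
    ultimately have "A k + ennreal t \<le> A k + 0" using Bm by (metis add.right_neutral order_trans)
    moreover have "A k \<noteq> \<infinity>" using Afin[OF k] by simp
    ultimately have "ennreal t \<le> 0" using ennreal_add_left_cancel_le[THEN iffD1] by (metis (no_types))
    with t show False by simp
  qed
  then have "\<forall>k\<in>I. \<exists>y. y \<in> Q k \<and> u y = g y \<and> Gg k y \<le> B k" by blast
  then obtain y where y: "\<And>k. k \<in> I \<Longrightarrow> y k \<in> Q k \<and> u (y k) = g (y k) \<and> Gg k (y k) \<le> B k"
    by metis
  have eq: "(\<integral>\<^sup>+x. ennreal((u x - u (y k))^2) * indicator (Q k \<inter> \<Omega>) x \<partial>lebesgue) = Gg k (y k)" if k: "k \<in> I" for k
  proof -
    have "(\<integral>\<^sup>+x. ennreal((u x - u (y k))^2) * indicator (Q k \<inter> \<Omega>) x \<partial>lebesgue)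
        = (\<integral>\<^sup>+x. ennreal((u x - u (y k))^2) * indicator (Q k \<inter> \<Omega>) x \<partial>lborel)"
      by (simp add: nn_integral_completion)
    also have "\<dots> = Gg k (y k)" unfolding Gg_def
      using g(2) y[OF k] by (intro nn_integral_cong_AE) (auto elim!: eventually_mono)
    finally show ?thesis .
  qed
  have "(\<Sum>k\<in>I. \<integral>\<^sup>+x. ennreal((u x - u (y k))^2) * indicator (Q k \<inter> \<Omega>) x \<partial>lebesgue) \<le> (\<Sum>k\<in>I. B k)"
    using eq y by (intro sum_mono) auto
  also have "\<dots> = (\<Sum>k\<in>I. A k) * ennreal (1/m) + of_nat (card I) * ennreal (t/m)"
    unfolding B_def by (simp add: sum.distrib sum_distrib_right)
  also have "\<dots> \<le> ennreal (\<kappa> * E) * ennreal (1/m) + of_nat (card I) * ennreal (t/m)"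
    using Asum by (intro add_mono mult_right_mono) auto
  also have "\<dots> = ennreal ((\<kappa>*E + real (card I)*t)/m)"
  proof -
    have "ennreal (\<kappa> * E) * ennreal (1/m) = ennreal (\<kappa> * E * (1/m))"
      using \<kappa>(1) E(2) m by (intro ennreal_mult[symmetric]) auto
    also have "\<dots> = ennreal (\<kappa> * E / m)" by simp
    finally have 1: "ennreal (\<kappa> * E) * ennreal (1/m) = ennreal (\<kappa> * E / m)" .
    have "of_nat (card I) * ennreal (t/m) = ennreal (real (card I)) * ennreal (t/m)"
      by (simp only: ennreal_of_nat_eq_real_of_nat)
    also have "\<dots> = ennreal (real (card I) * (t/m))"
      using t m by (intro ennreal_mult[symmetric]) auto
    also have "\<dots> = ennreal (real (card I) * t / m)" by simp
    finally have 2: "of_nat (card I) * ennreal (t/m) = ennreal (real (card I) * t / m)" .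
    have "ennreal (\<kappa> * E / m) + ennreal (real (card I) * t / m) = ennreal (\<kappa> * E / m + real (card I) * t / m)"
      using \<kappa>(1) E(2) m t by (intro ennreal_plus[symmetric]) auto
    also have "\<dots> = ennreal ((\<kappa>*E + real (card I)*t)/m)" by (simp add: add_divide_distrib)
    finally have 3: "ennreal (\<kappa> * E / m) + ennreal (real (card I) * t / m) = ennreal ((\<kappa>*E + real (card I)*t)/m)" .
    show ?thesis unfolding 1 2 3 ..
  qed
  finally show ?thesis using y by blast
qed

lemma three_sq: "(p - q)^2 \<le> 3*(p - a)^2 + 3*(a - b)^2 + 3*(q - b)^2" for p q a b :: real
proof -
  have "0 \<le> ((p-a)-(a-b))^2 + ((a-b)-(b-q))^2 + ((p-a)-(b-q))^2" by simp
  then show ?thesis by (simp add: power2_eq_square algebra_simps)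
qed

lemma two_sq: "a^2 \<le> 2*p^2 + 2*(p - a)^2" for p a :: real
proof -
  have "0 \<le> (p - (p - a))^2 - a^2 + (p + (p - a))^2" by simp
  then show ?thesis by (simp add: power2_eq_square algebra_simps)
qed

lemma cell_est:
  fixes u v :: "'a \<Rightarrow> real"
  assumes [measurable]: "u \<in> borel_measurable M" "v \<in> borel_measurable M" "A \<in> sets M"
  shows "(\<integral>\<^sup>+x. ennreal ((u x - v x)^2) * indicator A x \<partial>M) \<le>
     3 * (\<integral>\<^sup>+x. ennreal ((u x - a)^2) * indicator A x \<partial>M) + 3 * (ennreal ((a - b)^2) * emeasure M A)
     + 3 * (\<integral>\<^sup>+x. ennreal ((v x - b)^2) * indicator A x \<partial>M)"
proof -
  have "(\<integral>\<^sup>+x. ennreal ((u x - v x)^2) * indicator A x \<partial>M) \<le>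
     (\<integral>\<^sup>+x. (3 * (ennreal ((u x - a)^2) * indicator A x) + 3 * (ennreal ((a - b)^2) * indicator A x))
        + 3 * (ennreal ((v x - b)^2) * indicator A x) \<partial>M)"
  proof (intro nn_integral_mono)
    fix x
    have "ennreal ((u x - v x)^2) \<le> ennreal (3*(u x - a)^2 + 3*(a - b)^2 + 3*(v x - b)^2)"
      by (intro ennreal_leI three_sq)
    also have "\<dots> = 3 * ennreal ((u x - a)^2) + 3 * ennreal ((a - b)^2) + 3 * ennreal ((v x - b)^2)"
      by (simp add: ennreal_plus ennreal_mult)
    finally show "ennreal ((u x - v x)^2) * indicator A x \<le> (3 * (ennreal ((u x - a)^2) * indicator A x) + 3 * (ennreal ((a - b)^2) * indicator A x))
        + 3 * (ennreal ((v x - b)^2) * indicator A x)"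
      by (cases "x \<in> A") (auto simp: indicator_def)
  qed
  also have "\<dots> = 3 * (\<integral>\<^sup>+x. ennreal ((u x - a)^2) * indicator A x \<partial>M) + 3 * (\<integral>\<^sup>+x. ennreal ((a - b)^2) * indicator A x \<partial>M)
     + 3 * (\<integral>\<^sup>+x. ennreal ((v x - b)^2) * indicator A x \<partial>M)"
    by (simp add: nn_integral_add nn_integral_cmult)
  also have "(\<integral>\<^sup>+x. ennreal ((a - b)^2) * indicator A x \<partial>M) = ennreal ((a - b)^2) * emeasure M A"
    by (simp add: nn_integral_cmult_indicator)
  finally show ?thesis .
qed

lemma coef_bound:
  fixes u :: "'a \<Rightarrow> real"
  assumes [measurable]: "u \<in> borel_measurable M" "A \<in> sets M"
  shows "ennreal (a^2) * emeasure M A \<le> 2 * (\<integral>\<^sup>+x. ennreal ((u x)^2) * indicator A x \<partial>M) + 2 * (\<integral>\<^sup>+x. ennreal ((u x - a)^2) * indicator A x \<partial>M)"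
proof -
  have "ennreal (a^2) * emeasure M A = (\<integral>\<^sup>+x. ennreal (a^2) * indicator A x \<partial>M)"
    by (simp add: nn_integral_cmult_indicator)
  also have "\<dots> \<le> (\<integral>\<^sup>+x. 2 * (ennreal ((u x)^2) * indicator A x) + 2 * (ennreal ((u x - a)^2) * indicator A x) \<partial>M)"
  proof (intro nn_integral_mono)
    fix x
    have "ennreal (a^2) \<le> ennreal (2*(u x)^2 + 2*(u x - a)^2)" by (intro ennreal_leI two_sq)
    also have "\<dots> = 2 * ennreal ((u x)^2) + 2 * ennreal ((u x - a)^2)"
      by (simp add: ennreal_plus ennreal_mult)
    finally show "ennreal (a^2) * indicator A x \<le> 2 * (ennreal ((u x)^2) * indicator A x) + 2 * (ennreal ((u x - a)^2) * indicator A x)"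
      by (cases "x \<in> A") (auto simp: indicator_def)
  qed
  also have "\<dots> = 2 * (\<integral>\<^sup>+x. ennreal ((u x)^2) * indicator A x \<partial>M) + 2 * (\<integral>\<^sup>+x. ennreal ((u x - a)^2) * indicator A x \<partial>M)"
    by (simp add: nn_integral_add nn_integral_cmult)
  finally show ?thesis .
qed

lemma final_est:
  fixes u v :: "'a::euclidean_space \<Rightarrow> real" and Q :: "'i \<Rightarrow> 'a set"
  assumes fin: "finite I" and Qs: "\<And>k. k\<in>I \<Longrightarrow> Q k \<in> sets lborel" and disj: "disjoint_family_on Q I"
    and cov: "\<Omega> \<subseteq> (\<Union>k\<in>I. Q k)" and \<Omega>: "open \<Omega>"
    and [measurable]: "u \<in> borel_measurable lebesgue" "v \<in> borel_measurable lebesgue"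
    and Gu: "(\<Sum>k\<in>I. \<integral>\<^sup>+x. ennreal ((u x - a k)^2) * indicator (Q k \<inter> \<Omega>) x \<partial>lebesgue) \<le> ennreal \<epsilon>"
    and Gv: "(\<Sum>k\<in>I. \<integral>\<^sup>+x. ennreal ((v x - b k)^2) * indicator (Q k \<inter> \<Omega>) x \<partial>lebesgue) \<le> ennreal \<epsilon>"
    and ab: "\<And>k. k\<in>I \<Longrightarrow> emeasure lebesgue (Q k \<inter> \<Omega>) \<noteq> 0 \<Longrightarrow> \<bar>a k - b k\<bar> \<le> \<delta>"
    and \<delta>: "\<delta> \<ge> 0" and \<epsilon>: "\<epsilon> \<ge> 0"
    and mO: "emeasure lebesgue \<Omega> \<le> ennreal mO" and mO0: "mO \<ge> 0"
  shows "L2sq \<Omega> (\<lambda>x. u x - v x) \<le> ennreal (6*\<epsilon> + 3*\<delta>^2*mO)"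
proof -
  have Qs': "Q k \<in> sets lebesgue" if "k \<in> I" for k using Qs[OF that] by simp
  have \<Omega>s: "\<Omega> \<in> sets lebesgue" using \<Omega> by simp
  have QO: "Q k \<inter> \<Omega> \<in> sets lebesgue" if "k \<in> I" for k using Qs'[OF that] \<Omega>s by auto
  have "L2sq \<Omega> (\<lambda>x. u x - v x) = (\<integral>\<^sup>+x. ennreal ((u x - v x)^2) * indicator \<Omega> x \<partial>lebesgue)"
    unfolding L2sq_def by simp
  also have "\<dots> = (\<Sum>k\<in>I. \<integral>\<^sup>+x. ennreal ((u x - v x)^2) * indicator (Q k \<inter> \<Omega>) x \<partial>lebesgue)"
    by (rule decomp[OF fin Qs' \<Omega>s disj cov]) measurable
  also have "\<dots> \<le> (\<Sum>k\<in>I. 3 * (\<integral>\<^sup>+x. ennreal ((u x - a k)^2) * indicator (Q k \<inter> \<Omega>) x \<partial>lebesgue)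
       + 3 * (ennreal ((a k - b k)^2) * emeasure lebesgue (Q k \<inter> \<Omega>))
       + 3 * (\<integral>\<^sup>+x. ennreal ((v x - b k)^2) * indicator (Q k \<inter> \<Omega>) x \<partial>lebesgue))"
    by (intro sum_mono cell_est QO) measurable
  also have "\<dots> = 3 * (\<Sum>k\<in>I. \<integral>\<^sup>+x. ennreal ((u x - a k)^2) * indicator (Q k \<inter> \<Omega>) x \<partial>lebesgue)
       + 3 * (\<Sum>k\<in>I. ennreal ((a k - b k)^2) * emeasure lebesgue (Q k \<inter> \<Omega>))
       + 3 * (\<Sum>k\<in>I. \<integral>\<^sup>+x. ennreal ((v x - b k)^2) * indicator (Q k \<inter> \<Omega>) x \<partial>lebesgue)"
    by (simp add: sum.distrib sum_distrib_left)
  finally have L: "L2sq \<Omega> (\<lambda>x. u x - v x) \<le> 3 * (\<Sum>k\<in>I. \<integral>\<^sup>+x. ennreal ((u x - a k)^2) * indicator (Q k \<inter> \<Omega>) x \<partial>lebesgue)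
       + 3 * (\<Sum>k\<in>I. ennreal ((a k - b k)^2) * emeasure lebesgue (Q k \<inter> \<Omega>))
       + 3 * (\<Sum>k\<in>I. \<integral>\<^sup>+x. ennreal ((v x - b k)^2) * indicator (Q k \<inter> \<Omega>) x \<partial>lebesgue)" .
  have "(\<Sum>k\<in>I. ennreal ((a k - b k)^2) * emeasure lebesgue (Q k \<inter> \<Omega>)) \<le> (\<Sum>k\<in>I. ennreal (\<delta>^2) * emeasure lebesgue (Q k \<inter> \<Omega>))"
  proof (intro sum_mono)
    fix k assume k: "k \<in> I"
    show "ennreal ((a k - b k)^2) * emeasure lebesgue (Q k \<inter> \<Omega>) \<le> ennreal (\<delta>^2) * emeasure lebesgue (Q k \<inter> \<Omega>)"
    proof (cases "emeasure lebesgue (Q k \<inter> \<Omega>) = 0")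
      case False
      then have "\<bar>a k - b k\<bar> \<le> \<delta>" using ab k by blast
      then have "\<bar>a k - b k\<bar>^2 \<le> \<delta>^2" by (intro power_mono) auto
      then have "(a k - b k)^2 \<le> \<delta>^2" by simp
      then show ?thesis by (intro mult_right_mono ennreal_leI) auto
    qed simp
  qed
  also have "(\<Sum>k\<in>I. ennreal (\<delta>^2) * emeasure lebesgue (Q k \<inter> \<Omega>)) = ennreal (\<delta>^2) * emeasure lebesgue \<Omega>"
  proof -
    have "(\<integral>\<^sup>+x. 1 * indicator \<Omega> x \<partial>lebesgue) = (\<Sum>k\<in>I. \<integral>\<^sup>+x. 1 * indicator (Q k \<inter> \<Omega>) x \<partial>lebesgue)"
      by (rule decomp[OF fin Qs' \<Omega>s disj cov]) measurable
    then have "emeasure lebesgue \<Omega> = (\<Sum>k\<in>I. emeasure lebesgue (Q k \<inter> \<Omega>))"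
      using QO \<Omega>s by simp
    then show ?thesis by (simp add: sum_distrib_left)
  qed
  also have "ennreal (\<delta>^2) * emeasure lebesgue \<Omega> \<le> ennreal (\<delta>^2) * ennreal mO"
    using mO by (intro mult_left_mono) auto
  finally have AB: "(\<Sum>k\<in>I. ennreal ((a k - b k)^2) * emeasure lebesgue (Q k \<inter> \<Omega>)) \<le> ennreal (\<delta>^2) * ennreal mO" .
  have "3 * (\<Sum>k\<in>I. \<integral>\<^sup>+x. ennreal ((u x - a k)^2) * indicator (Q k \<inter> \<Omega>) x \<partial>lebesgue)
       + 3 * (\<Sum>k\<in>I. ennreal ((a k - b k)^2) * emeasure lebesgue (Q k \<inter> \<Omega>))
       + 3 * (\<Sum>k\<in>I. \<integral>\<^sup>+x. ennreal ((v x - b k)^2) * indicator (Q k \<inter> \<Omega>) x \<partial>lebesgue)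
      \<le> 3 * ennreal \<epsilon> + 3 * (ennreal (\<delta>^2) * ennreal mO) + 3 * ennreal \<epsilon>"
    by (intro add_mono mult_left_mono Gu Gv AB) auto
  also have "\<dots> = ennreal (6*\<epsilon> + 3*\<delta>^2*mO)"
  proof -
    have e1: "3 * ennreal \<epsilon> = ennreal (3*\<epsilon>)" using \<epsilon> by (simp add: ennreal_mult)
    have e2: "3 * (ennreal (\<delta>^2) * ennreal mO) = ennreal (3*\<delta>^2*mO)" using mO0 by (simp add: ennreal_mult mult.assoc)
    have e3: "ennreal (3*\<epsilon> + 3*\<delta>^2*mO) = ennreal (3*\<epsilon>) + ennreal (3*\<delta>^2*mO)"
      using \<epsilon> mO0 by (intro ennreal_plus) auto
    have e4: "ennreal ((3*\<epsilon> + 3*\<delta>^2*mO) + 3*\<epsilon>) = ennreal (3*\<epsilon> + 3*\<delta>^2*mO) + ennreal (3*\<epsilon>)"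
      using \<epsilon> mO0 by (intro ennreal_plus) auto
    have e5: "6*\<epsilon> + 3*\<delta>^2*mO = (3*\<epsilon> + 3*\<delta>^2*mO) + 3*\<epsilon>" by simp
    show ?thesis unfolding e1 e2 e5 e4 e3 ..
  qed
  finally show ?thesis using L by (rule order_trans[rotated])
qed


theorem mainTheorem2:
  fixes \<Omega> :: "'a::euclidean_space set"
    and J :: "'a \<times> 'a \<Rightarrow> real"
    and K :: "'a \<Rightarrow> real"
    and ell :: "real \<Rightarrow> real"
    and \<rho> :: real
  assumes "bounded \<Omega>" and "open \<Omega>"
    and J_meas: "J \<in> borel_measurable lebesgue"
    and J_nonneg: "\<And>x y. J (x, y) \<ge> 0"
    and J_sym: "\<And>x y. J (x, y) = J (y, x)"
    and J_int: "\<exists>C::real. \<forall>x. (\<integral>\<^sup>+ y. ennreal (min 1 ((norm (x - y))\<^sup>2) * J (x, y)) \<partial>lebesgue) \<le> ennreal C"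
    and K_meas: "K \<in> borel_measurable lebesgue"
    and K_nonneg: "\<And>z. K z \<ge> 0"
    and J_ge_K: "\<And>x y. J (x, y) \<ge> K (x - y)"
    and K_nonint: "\<And>\<epsilon>. \<epsilon> > 0 \<Longrightarrow> \<not> set_integrable lebesgue (ball 0 \<epsilon>) K"
    and \<rho>_pos: "\<rho> > 0"
    and ell_pos: "\<And>s. 0 < s \<Longrightarrow> s < \<rho> \<Longrightarrow> ell s > 0"
    and ell_bdd: "\<And>\<epsilon>. 0 < \<epsilon> \<Longrightarrow> \<epsilon> < \<rho> \<Longrightarrow>
        \<exists>a b. 0 < a \<and> 0 < b \<and> (\<forall>s. \<epsilon> \<le> s \<and> s < \<rho> \<longrightarrow> a \<le> ell s \<and> ell s \<le> b)"
    and K_form: "\<And>z. 0 < norm z \<Longrightarrow> norm z < \<rho> \<Longrightarrow> K z = ell (norm z) / (norm z) ^ DIM('a)"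
    and M_inf: "((\<lambda>r. \<integral>\<^sup>+ s \<in> {r..\<rho>}. ennreal (ell s / s) \<partial>lborel) \<longlongrightarrow> \<infinity>) (at_right 0)"
    and ell_inf: "filterlim ell at_top (at_right 0)"
  shows "\<forall>S. S \<subseteq> HJ J \<Omega> \<and> (\<exists>C::real. \<forall>u\<in>S. HJnormsq J \<Omega> u \<le> ennreal C)
           \<longrightarrow> L2_totally_bounded \<Omega> S"
proof (intro allI impI)
  fix S assume SA: "S \<subseteq> HJ J \<Omega> \<and> (\<exists>C::real. \<forall>u\<in>S. HJnormsq J \<Omega> u \<le> ennreal C)"
  then obtain C where C: "\<And>u. u\<in>S \<Longrightarrow> HJnormsq J \<Omega> u \<le> ennreal C" by blast
  define C1 where "C1 = max C 1"
  have C1: "C1 > 0" "ennreal C \<le> ennreal C1" unfolding C1_def by (auto intro: ennreal_leI)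
  have umeas: "u \<in> borel_measurable lebesgue" if "u \<in> S" for u
    using SA that unfolding HJ_def by auto
  have L2u: "L2sq \<Omega> u \<le> ennreal C1" if "u \<in> S" for u
  proof -
    have "L2sq \<Omega> u \<le> HJnormsq J \<Omega> u" unfolding HJnormsq_def by (rule add_increasing2[OF zero_le order_refl])
    then show ?thesis using order_trans[OF C[OF that] C1(2)] by (rule order_trans)
  qed
  have Eu: "(\<integral>\<^sup>+p. ennreal((u(fst p) - u(snd p))^2 * J p) * indicator (QOmega \<Omega>) p \<partial>lebesgue) \<le> ennreal (2*C1)" if "u \<in> S" for u
  proof -
    let ?X = "(\<integral>\<^sup>+p. ennreal((u(fst p) - u(snd p))^2 * J p) * indicator (QOmega \<Omega>) p \<partial>lebesgue)"
    have "energy J \<Omega> u \<le> HJnormsq J \<Omega> u" unfolding HJnormsq_def by (rule add_increasing[OF zero_le order_refl])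
    then have "energy J \<Omega> u \<le> ennreal C1" using order_trans[OF C[OF that] C1(2)] by (rule order_trans)
    then have en: "(1/2) * ?X \<le> ennreal C1" unfolding energy_def .
    have h: "(2::ennreal) * (1/2) = 1"
      unfolding ennreal_times_divide mult_1_right by (rule ennreal_divide_self) auto
    have "?X = 2 * ((1/2) * ?X)" by (simp add: mult.assoc[symmetric] h)
    also have "\<dots> \<le> 2 * ennreal C1" using en by (intro mult_left_mono) auto
    also have "\<dots> = ennreal (2*C1)" using C1 by (simp add: ennreal_mult)
    finally show ?thesis .
  qed
  show "L2_totally_bounded \<Omega> S" unfolding L2_totally_bounded_def
  proof (intro allI impI)
    fix e :: real assume e: "e > 0"
    define N where "N = DIM('a)"
    define n where "n = real N"
    have n: "n \<ge> 1" unfolding n_def N_def using DIM_positive[where 'a='a] by linarith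
    define \<epsilon>0 where "\<epsilon>0 = e^2/12"
    have \<epsilon>0: "\<epsilon>0 > 0" unfolding \<epsilon>0_def using e by simp
    define P where "P = n^N"
    have P: "P > 0" unfolding P_def using n by simp
    define T where "T = 4 * P * C1 / \<epsilon>0 + 1"
    have T0: "0 \<le> 4 * P * C1 / \<epsilon>0" using P C1 \<epsilon>0 by simp
    have T: "T > 0" "4 * P * C1 / \<epsilon>0 \<le> T" unfolding T_def using T0 by auto
    have "eventually (\<lambda>x. T \<le> ell x) (at_right 0)" using ell_inf by (simp add: filterlim_at_top)
    then obtain d where d: "d > 0" "\<And>y. 0 < y \<Longrightarrow> y < d \<Longrightarrow> T \<le> ell y"
      unfolding eventually_at_right_field by auto
    define r where "r = min d \<rho> / 2"
    have r: "r > 0" "r < d" "r < \<rho>" unfolding r_def using d \<rho>_pos by auto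
    define s where "s = r / n"
    have s: "s > 0" "n * s = r" unfolding s_def using r n by auto
    obtain I where I: "finite I" "disjoint_family_on (cell s) I" "\<Omega> \<subseteq> (\<Union>k\<in>I. cell s k)"
      using cells_exist[OF \<open>bounded \<Omega>\<close> s(1)] by blast
    define m where "m = s^N"
    have m: "m > 0" unfolding m_def using s by simp
    define \<kappa> where "\<kappa> = r^N / T"
    have \<kappa>0: "\<kappa> \<ge> 0" unfolding \<kappa>_def using r T by simp
    have \<kappa>: "1 \<le> \<kappa> * J (x, y)" if "k \<in> I" "x \<in> cell s k" "x \<in> \<Omega>" "y \<in> cell s k" "x \<noteq> y" for k x y
    proof -
      define z where "z = x - y"
      have z0: "0 < norm z" unfolding z_def using that by simp
      have zr: "norm z \<le> r" unfolding z_def using cell_diam[OF that(2,4)] s unfolding n_def N_def by simp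
      have ellT: "T \<le> ell (norm z)" using d(2)[OF z0] zr r by linarith
      have Kz: "K z = ell (norm z) / norm z ^ N" unfolding N_def using K_form[OF z0] zr r by linarith
      have "norm z ^ N \<le> r ^ N" using zr z0 by (intro power_mono) auto
      then have "T / r^N \<le> ell (norm z) / norm z ^ N"
        using ellT T z0 by (intro frac_le) auto
      also have "\<dots> \<le> J (x, y)" using J_ge_K[of x y] Kz unfolding z_def by simp
      finally have "\<kappa> * (T / r^N) \<le> \<kappa> * J (x, y)" using \<kappa>0 by (intro mult_left_mono) auto
      moreover have "\<kappa> * (T / r^N) = 1" unfolding \<kappa>_def using T r by simp
      ultimately show ?thesis by linarith
    qed
    define t where "t = m * \<epsilon>0 / (2 * (real (card I) + 1))"
    have t: "t > 0" unfolding t_def using m \<epsilon>0 by simp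
    have budget: "(\<kappa> * (2*C1) + real (card I) * t) / m \<le> \<epsilon>0"
    proof -
      have rN: "r^N = P * m" unfolding P_def m_def s(2)[symmetric] by (rule power_mult_distrib)
      have 1: "\<kappa> * (2*C1) / m = 2 * P * C1 / T" unfolding \<kappa>_def rN using m T by (simp add: field_simps)
      have "2 * P * C1 \<le> T * (\<epsilon>0/2)"
      proof -
        have "4 * P * C1 \<le> T * \<epsilon>0" using T(2) \<epsilon>0 by (simp add: field_simps)
        then show ?thesis by simp
      qed
      then have 2: "2 * P * C1 / T \<le> \<epsilon>0/2" using T by (simp add: field_simps)
      define \<tau> where "\<tau> = \<epsilon>0 / (2 * (real (card I) + 1))"
      have den: "2 * (real (card I) + 1) > 0" by simp
      have \<tau>0: "\<tau> \<ge> 0" unfolding \<tau>_def using \<epsilon>0 den by simp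
      have \<tau>e: "\<tau> * (2 * (real (card I) + 1)) = \<epsilon>0" unfolding \<tau>_def using den by simp
      have tt: "t = m * \<tau>" unfolding t_def \<tau>_def by simp
      have 3: "real (card I) * t / m = real (card I) * \<tau>" unfolding tt using m by simp
      have "2 * (real (card I) * \<tau>) \<le> \<tau> * (2 * (real (card I) + 1))" using \<tau>0 by (simp add: algebra_simps)
      then have 4: "real (card I) * t / m \<le> \<epsilon>0/2" unfolding 3 \<tau>e by simp
      have "(\<kappa> * (2*C1) + real (card I) * t) / m = \<kappa> * (2*C1) / m + real (card I) * t / m"
        by (simp add: add_divide_distrib)
      then show ?thesis using 1 2 4 by linarith
    qed
    have sel: "\<forall>u\<in>S. \<exists>y. (\<forall>k\<in>I. y k \<in> cell s k) \<and>
        (\<Sum>k\<in>I. \<integral>\<^sup>+x. ennreal((u x - u (y k))^2) * indicator (cell s k \<inter> \<Omega>) x \<partial>lebesgue) \<le> ennreal \<epsilon>0"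
    proof
      fix u assume u: "u \<in> S"
      have ex: "\<exists>y. (\<forall>k\<in>I. y k \<in> cell s k) \<and> (\<Sum>k\<in>I. \<integral>\<^sup>+x. ennreal((u x - u (y k))^2) * indicator (cell s k \<inter> \<Omega>) x \<partial>lebesgue)
           \<le> ennreal ((\<kappa>*(2*C1) + real (card I)*t)/m)"
      proof (rule key_select[OF umeas[OF u] I(1) cell_sets _ m I(2) \<open>open \<Omega>\<close> J_meas \<kappa>0 \<kappa> Eu[OF u] _ t])
        show "ennreal m \<le> emeasure lborel (cell s k)" for k :: "'a \<Rightarrow> int" unfolding m_def N_def by (rule cell_measure[OF s(1)])
        show "2 * C1 \<ge> 0" using C1 by simp
      qed
      show "\<exists>y. (\<forall>k\<in>I. y k \<in> cell s k) \<and>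
        (\<Sum>k\<in>I. \<integral>\<^sup>+x. ennreal((u x - u (y k))^2) * indicator (cell s k \<inter> \<Omega>) x \<partial>lebesgue) \<le> ennreal \<epsilon>0"
      proof -
        from ex obtain y where y: "\<forall>k\<in>I. y k \<in> cell s k"
          "(\<Sum>k\<in>I. \<integral>\<^sup>+x. ennreal((u x - u (y k))^2) * indicator (cell s k \<inter> \<Omega>) x \<partial>lebesgue)
           \<le> ennreal ((\<kappa>*(2*C1) + real (card I)*t)/m)" by blast
        show ?thesis using y(1) order_trans[OF y(2) ennreal_leI[OF budget]] by blast
      qed
    qed
    then obtain Y where Y: "\<And>u. u \<in> S \<Longrightarrow> (\<forall>k\<in>I. Y u k \<in> cell s k) \<and>
        (\<Sum>k\<in>I. \<integral>\<^sup>+x. ennreal((u x - u (Y u k))^2) * indicator (cell s k \<inter> \<Omega>) x \<partial>lebesgue) \<le> ennreal \<epsilon>0"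
      using bchoice[OF sel] by blast
    define c where "c u k = u (Y u k)" for u k
    define mk where "mk k = measure lebesgue (cell s k \<inter> \<Omega>)" for k
    have \<Omega>s: "\<Omega> \<in> sets borel" using \<open>open \<Omega>\<close> by simp
    have emk: "emeasure lebesgue (cell s k \<inter> \<Omega>) = ennreal (mk k)" for k
    proof -
      have sb: "cell s k \<inter> \<Omega> \<in> sets borel" using cell_sets[of s k] \<Omega>s by auto
      have "emeasure lborel (cell s k \<inter> \<Omega>) < \<infinity>"
        using \<open>bounded \<Omega>\<close> by (intro emeasure_bounded_finite) (auto intro: bounded_subset)
      then have "emeasure lebesgue (cell s k \<inter> \<Omega>) \<noteq> top" using sb by simp
      then show ?thesis unfolding mk_def by (rule emeasure_eq_ennreal_measure)
    qed
    have mk0: "mk k \<ge> 0" for k unfolding mk_def by simp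
    define mO where "mO = measure lebesgue \<Omega>"
    have emO: "emeasure lebesgue \<Omega> = ennreal mO"
    proof -
      have "emeasure lborel \<Omega> < \<infinity>" using \<open>bounded \<Omega>\<close> by (intro emeasure_bounded_finite)
      then have "emeasure lebesgue \<Omega> \<noteq> top" using \<Omega>s by simp
      then show ?thesis unfolding mO_def by (rule emeasure_eq_ennreal_measure)
    qed
    have mO0: "mO \<ge> 0" unfolding mO_def by simp
    define Rb where "Rb k = sqrt ((2*C1 + 2*\<epsilon>0) / mk k)" for k
    have Rb0: "Rb k \<ge> 0" for k unfolding Rb_def using C1 \<epsilon>0 mk0[of k] by simp
    have cb: "\<bar>c u k\<bar> \<le> Rb k" if u: "u \<in> S" and k: "k \<in> I" and mk: "mk k > 0" for u k
    proof -
      note [measurable] = umeas[OF u]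
      have sl: "cell s k \<inter> \<Omega> \<in> sets lebesgue" using cell_sets[of s k] \<Omega>s by auto
      have "ennreal ((c u k)^2) * emeasure lebesgue (cell s k \<inter> \<Omega>) \<le>
          2 * (\<integral>\<^sup>+x. ennreal ((u x)^2) * indicator (cell s k \<inter> \<Omega>) x \<partial>lebesgue)
          + 2 * (\<integral>\<^sup>+x. ennreal ((u x - c u k)^2) * indicator (cell s k \<inter> \<Omega>) x \<partial>lebesgue)"
        by (rule coef_bound[OF umeas[OF u] sl])
      also have "\<dots> \<le> 2 * ennreal C1 + 2 * ennreal \<epsilon>0"
      proof (intro add_mono mult_left_mono order_refl)
        have "(\<integral>\<^sup>+x. ennreal ((u x)^2) * indicator (cell s k \<inter> \<Omega>) x \<partial>lebesgue) \<le>
              (\<integral>\<^sup>+x. ennreal ((u x)^2) * indicator \<Omega> x \<partial>lebesgue)"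
          by (intro nn_integral_mono) (auto simp: indicator_def)
        also have "\<dots> = L2sq \<Omega> u" unfolding L2sq_def ..
        also have "\<dots> \<le> ennreal C1" by (rule L2u[OF u])
        finally show "(\<integral>\<^sup>+x. ennreal ((u x)^2) * indicator (cell s k \<inter> \<Omega>) x \<partial>lebesgue) \<le> ennreal C1" .
        have "(\<integral>\<^sup>+x. ennreal ((u x - c u k)^2) * indicator (cell s k \<inter> \<Omega>) x \<partial>lebesgue)
            \<le> (\<Sum>k\<in>I. \<integral>\<^sup>+x. ennreal((u x - u (Y u k))^2) * indicator (cell s k \<inter> \<Omega>) x \<partial>lebesgue)"
          unfolding c_def using k I(1) by (intro member_le_sum[where f="\<lambda>k. \<integral>\<^sup>+x. ennreal((u x - u (Y u k))^2) * indicator (cell s k \<inter> \<Omega>) x \<partial>lebesgue"]) auto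
        also have "\<dots> \<le> ennreal \<epsilon>0" using Y[OF u] by blast
        finally show "(\<integral>\<^sup>+x. ennreal ((u x - c u k)^2) * indicator (cell s k \<inter> \<Omega>) x \<partial>lebesgue) \<le> ennreal \<epsilon>0" .
      qed auto
      also have "\<dots> = ennreal (2*C1 + 2*\<epsilon>0)" using C1 \<epsilon>0 by (simp add: ennreal_mult ennreal_plus)
      finally have "ennreal ((c u k)^2 * mk k) \<le> ennreal (2*C1 + 2*\<epsilon>0)"
        unfolding emk using mk by (simp add: ennreal_mult)
      moreover have nn: "0 \<le> 2*C1 + 2*\<epsilon>0" using C1 \<epsilon>0 by simp
      ultimately have "(c u k)^2 * mk k \<le> 2*C1 + 2*\<epsilon>0" using ennreal_le_iff[OF nn] by blast
      then have "(c u k)^2 \<le> (2*C1 + 2*\<epsilon>0) / mk k" using mk by (simp add: pos_le_divide_eq)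
      then have "sqrt ((c u k)^2) \<le> Rb k" unfolding Rb_def by (rule real_sqrt_le_mono)
      then show ?thesis by simp
    qed
    define \<delta> where "\<delta> = e / (4 * sqrt (mO + 1))"
    have \<delta>: "\<delta> > 0" unfolding \<delta>_def using e mO0 by simp
    define Z where "Z k = \<lceil>Rb k / \<delta>\<rceil> + 1" for k
    define idx where "idx u = restrict (\<lambda>k. if mk k > 0 then \<lfloor>c u k / \<delta>\<rfloor> else 0) I" for u
    have idx_in: "idx u \<in> PiE I (\<lambda>k. {-Z k..Z k})" if u: "u \<in> S" for u
      unfolding idx_def
    proof (rule restrict_PiE_iff[THEN iffD2], intro ballI)
      fix k assume k: "k \<in> I"
      have "0 \<le> Rb k / \<delta>" using Rb0[of k] \<delta> by simp
      then have Zp: "0 \<le> \<lceil>Rb k / \<delta>\<rceil>" by linarith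
      show "(if mk k > 0 then \<lfloor>c u k / \<delta>\<rfloor> else 0) \<in> {-Z k..Z k}"
      proof (cases "mk k > 0")
        case True
        have cb': "\<bar>c u k\<bar> \<le> Rb k" by (rule cb[OF u k True])
        have a1: "c u k / \<delta> \<le> Rb k / \<delta>" using cb' \<delta> by (simp add: divide_right_mono)
        have a2: "- (Rb k / \<delta>) \<le> c u k / \<delta>"
        proof -
          have "- Rb k \<le> c u k" using cb' by linarith
          from divide_right_mono[OF this, of \<delta>] \<delta> show ?thesis by simp
        qed
        have a3: "Rb k / \<delta> \<le> of_int \<lceil>Rb k / \<delta>\<rceil>" by linarith
        have "\<lfloor>c u k / \<delta>\<rfloor> \<le> Z k" unfolding Z_def using a1 a3 by linarith
        moreover have "- Z k \<le> \<lfloor>c u k / \<delta>\<rfloor>" unfolding Z_def using a2 a3 by linarith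
        ultimately show ?thesis using True by simp
      next
        case False
        have "-Z k \<le> 0" "0 \<le> Z k" unfolding Z_def using Zp by linarith+
        then show ?thesis using False by simp
      qed
    qed
    have finidx: "finite (idx ` S)"
      by (rule finite_subset[of _ "PiE I (\<lambda>k. {-Z k..Z k})"]) (use idx_in I(1) in \<open>auto intro: finite_PiE\<close>)
    define F where "F = (\<lambda>f. SOME v. v \<in> S \<and> idx v = f) ` (idx ` S)"
    have FS: "F \<subseteq> S"
    proof
      fix v assume "v \<in> F"
      then obtain u where u: "u \<in> S" "v = (SOME v. v \<in> S \<and> idx v = idx u)" unfolding F_def by auto
      have "\<exists>v. v \<in> S \<and> idx v = idx u" using u by blast
      from someI_ex[OF this] u show "v \<in> S" by simp
    qed
    show "\<exists>F. finite F \<and> F \<subseteq> S \<and> (\<forall>u\<in>S. \<exists>v\<in>F. L2sq \<Omega> (\<lambda>x. u x - v x) < ennreal (e\<^sup>2))"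
    proof (intro exI conjI ballI)
      show "finite F" unfolding F_def using finidx by simp
      show "F \<subseteq> S" by (rule FS)
      fix u assume u: "u \<in> S"
      define v where "v = (SOME v. v \<in> S \<and> idx v = idx u)"
      have "\<exists>v. v \<in> S \<and> idx v = idx u" using u by blast
      from someI_ex[OF this] have v: "v \<in> S" "idx v = idx u" unfolding v_def by auto
      have vF: "v \<in> F" unfolding F_def v_def using u by blast
      have ab: "\<bar>c u k - c v k\<bar> \<le> \<delta>" if k: "k \<in> I" and ne: "emeasure lebesgue (cell s k \<inter> \<Omega>) \<noteq> 0" for k
      proof -
        have "\<not> mk k \<le> 0" using ne unfolding emk by (simp add: ennreal_eq_0_iff)
        then have mkp: "mk k > 0" by simp
        have "idx u k = idx v k" using v(2) by simp
        then have fl: "\<lfloor>c u k / \<delta>\<rfloor> = \<lfloor>c v k / \<delta>\<rfloor>" unfolding idx_def using k mkp by simp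
        have "\<bar>c u k / \<delta> - c v k / \<delta>\<bar> < 1"
        proof -
          have "of_int \<lfloor>c u k / \<delta>\<rfloor> \<le> c u k / \<delta>" "c u k / \<delta> < of_int \<lfloor>c u k / \<delta>\<rfloor> + 1" by linarith+
          moreover have "of_int \<lfloor>c v k / \<delta>\<rfloor> \<le> c v k / \<delta>" "c v k / \<delta> < of_int \<lfloor>c v k / \<delta>\<rfloor> + 1" by linarith+
          ultimately show ?thesis using fl by linarith
        qed
        then have "\<bar>c u k - c v k\<bar> / \<delta> < 1" using \<delta> by (simp add: diff_divide_distrib[symmetric])
        then show ?thesis using \<delta> by (simp add: divide_less_eq)
      qed
      have est: "L2sq \<Omega> (\<lambda>x. u x - v x) \<le> ennreal (6*\<epsilon>0 + 3*\<delta>^2*mO)"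
      proof (rule final_est[OF I(1) cell_sets I(2) I(3) \<open>open \<Omega>\<close> umeas[OF u] umeas[OF v(1)] _ _ ab _ _ _ mO0])
        show "(\<Sum>k\<in>I. \<integral>\<^sup>+x. ennreal ((u x - c u k)^2) * indicator (cell s k \<inter> \<Omega>) x \<partial>lebesgue) \<le> ennreal \<epsilon>0"
          unfolding c_def using Y[OF u] by blast
        show "(\<Sum>k\<in>I. \<integral>\<^sup>+x. ennreal ((v x - c v k)^2) * indicator (cell s k \<inter> \<Omega>) x \<partial>lebesgue) \<le> ennreal \<epsilon>0"
          unfolding c_def using Y[OF v(1)] by blast
        show "\<delta> \<ge> 0" using \<delta> by simp
        show "\<epsilon>0 \<ge> 0" using \<epsilon>0 by simp
        show "emeasure lebesgue \<Omega> \<le> ennreal mO" using emO by simp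
      qed
      have "6*\<epsilon>0 + 3*\<delta>^2*mO < e^2"
      proof -
        have sq: "(sqrt (mO + 1))^2 = mO + 1" using mO0 by simp
        have d2: "\<delta>^2 = e^2 / (16 * (mO + 1))" unfolding \<delta>_def by (simp add: power_divide power_mult_distrib sq)
        have "\<delta>^2 * mO \<le> \<delta>^2 * (mO + 1)" by (intro mult_left_mono) auto
        also have "\<delta>^2 * (mO + 1) = e^2 / 16" unfolding d2 using mO0 by (simp add: field_simps)
        finally have "\<delta>^2 * mO \<le> e^2/16" .
        moreover have "3*\<delta>^2*mO = 3*(\<delta>^2*mO)" by simp
        moreover have "6*\<epsilon>0 = e^2/2" unfolding \<epsilon>0_def by simp
        moreover have "e^2 > 0" using e by simp
        ultimately show ?thesis by linarith
      qed
      then have "ennreal (6*\<epsilon>0 + 3*\<delta>^2*mO) < ennreal (e^2)" using e by (intro ennreal_lessI) auto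
      with est vF show "\<exists>v\<in>F. L2sq \<Omega> (\<lambda>x. u x - v x) < ennreal (e\<^sup>2)" using le_less_trans[OF est] by blast
    qed
  qed
qed


end
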